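(* Let $l\ge 1$ be an integer and let $x(1),\dots,x(l)\in[0,1)$. Define real numbers $z(1),\dots,z(l)$ by $z(1)=x(1)$ and, for $k=1,\dots,l-1$, with $d_k=(x(k+1)-2z(k))_{\mathrm{mod}\,1}\in[0,1)$, $$z(k+1)=\begin{cases}2z(k)+d_k & \text{if } d_k\in[0,1/3),\\ 2z(k)+1/3 & \text{if } d_k\in[1/3,2/3),\\ 2z(k) & \text{if } d_k\in[2/3,1).\end{cases}$$ Let $\theta\in[0,1)$ and suppose that for every $k=1,\dots,l$ the point $(2^{k-1}\theta)_{\mathrm{mod}\,1}$ lies in the open arc $(x(k),x(k)+1/3)$ on the circle, i.e. $\big((2^{k-1}\theta)_{\mathrm{mod}\,1}-x(k)\big)_{\mathrm{mod}\,1}\in(0,1/3)$. Then $\theta$ lies in the arc on the circle $\big[z(l)/2^{l-1},\,(z(l)+1/3)/2^{l-1}\big]$ (of length $1/(3\cdot 2^{l-1})$), i.e. there is an integer $m$ with $\theta+m\in\big[z(l)/2^{l-1},(z(l)+1/3)/2^{l-1}\big]$. Consequently the estimate $\hat\theta=\big((z(l)+1/6)/2^{l-1}\big)_{\mathrm{mod}\,1}$ satisfies $|\hat\theta-\theta|_1\le 1/(3\cdot 2^{l})$.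
   Context: Points of $[0,1)$ are regarded as points on a circle of unit circumference; $(a)_{\mathrm{mod}\,1}$ denotes the representative of $a$ in $[0,1)$. An arc $[a,b]$ (or $(a,b)$) with real $a\le b$, $b-a<1$, is the set $\{t_{\mathrm{mod}\,1}: t\in[a,b]\}$ (resp. $t\in(a,b)$). For $\theta,\hat\theta\in[0,1)$, $|\hat\theta-\theta|_1=\min\big((\hat\theta-\theta)_{\mathrm{mod}\,1},(\theta-\hat\theta)_{\mathrm{mod}\,1}\big)$. *)

theory Defs
  imports "HOL-Analysis.Analysis"
begin

definition mod1 :: "real \<Rightarrow> real" where
  "mod1 a = a - of_int \<lfloor>a\<rfloor>"

definition circ_dist :: "real \<Rightarrow> real \<Rightarrow> real" where
  "circ_dist th' th = min (mod1 (th' - th)) (mod1 (th - th'))"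

text \<open>The sequence z(1), z(2), ...; zseq x k = z(k+1) (0-based shift).\<close>
fun zseq :: "(nat \<Rightarrow> real) \<Rightarrow> nat \<Rightarrow> real" where
  "zseq x 0 = x 1"
| "zseq x (Suc k) =
     (let d = mod1 (x (k + 2) - 2 * zseq x k) in
      if d < 1/3 then 2 * zseq x k + d
      else if d < 2/3 then 2 * zseq x k + 1/3
      else 2 * zseq x k)"

definition z :: "(nat \<Rightarrow> real) \<Rightarrow> nat \<Rightarrow> real" where
  "z x k = zseq x (k - 1)"

end

theory Submission
  imports Defs
begin

lemma mod1_bounds: "0 \<le> mod1 a" "mod1 a < 1"
  unfolding mod1_def by linarith+

lemma mod1_id: "0 \<le> a \<Longrightarrow> a < 1 \<Longrightarrow> mod1 a = a"
  unfolding mod1_def by (simp add: floor_eq_iff)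

lemma mod1_shift: "mod1 (a + of_int n) = mod1 a"
  unfolding mod1_def by simp

lemma int_between:
  fixes N :: int
  assumes "(-1::real) < of_int N" "of_int N < (1::real)"
  shows "N = 0"
proof -
  have "-1 < N" using assms(1) by linarith
  moreover have "N < 1" using assms(2) by linarith
  ultimately show ?thesis by linarith
qed

lemma invariant:
  fixes l :: nat and x :: "nat \<Rightarrow> real" and \<theta> :: real
  assumes "0 \<le> \<theta>" and "\<theta> < 1"
    and A: "\<And>k. 1 \<le> k \<Longrightarrow> k \<le> l \<Longrightarrow>
           0 < mod1 (mod1 (2 ^ (k - 1) * \<theta>) - x k) \<and>
           mod1 (mod1 (2 ^ (k - 1) * \<theta>) - x k) < 1/3"
  shows "j < l \<Longrightarrow> \<exists>m::int. 0 \<le> 2^j*(\<theta> + of_int m) - zseq x j \<and> 2^j*(\<theta> + of_int m) - zseq x j \<le> 1/3"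
proof (induction j)
  case 0
  then have h: "0 < mod1 (mod1 \<theta> - x 1) \<and> mod1 (mod1 \<theta> - x 1) < 1/3"
    using A[of 1] by simp
  have "mod1 \<theta> = \<theta>" using assms mod1_id by blast
  with h have h2: "0 < mod1 (\<theta> - x 1) \<and> mod1 (\<theta> - x 1) < 1/3" by simp
  show ?case
    apply (rule exI[of _ "- \<lfloor>\<theta> - x 1\<rfloor>"])
    using h2 unfolding mod1_def by simp
next
  case (Suc j)
  then obtain m :: int where hm: "0 \<le> 2^j*(\<theta> + of_int m) - zseq x j"
     "2^j*(\<theta> + of_int m) - zseq x j \<le> 1/3" by auto
  define a where "a = 2^j*(\<theta> + of_int m) - zseq x j"
  define b where "b = mod1 (mod1 (2 ^ (Suc j) * \<theta>) - x (j+2))"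
  define d where "d = mod1 (x (j + 2) - 2 * zseq x j)"
  have hb: "0 < b" "b < 1/3" using A[of "j+2"] Suc.prems unfolding b_def by auto
  have hd: "0 \<le> d" "d < 1" unfolding d_def using mod1_bounds by auto
  define N where "N = 2^(Suc j)*m + \<lfloor>2 ^ (Suc j) * \<theta>\<rfloor>
      + \<lfloor>mod1 (2 ^ (Suc j) * \<theta>) - x (j+2)\<rfloor> + \<lfloor>x (j + 2) - 2 * zseq x j\<rfloor>"
  have eqN: "2*a = d + b + of_int N"
    unfolding a_def b_def d_def N_def mod1_def by (simp add: algebra_simps)
  have zs: "zseq x (Suc j) = (if d < 1/3 then 2 * zseq x j + d
      else if d < 2/3 then 2 * zseq x j + 1/3 else 2 * zseq x j)"
    unfolding d_def by (simp add: Let_def)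
  have key: "2^(Suc j)*(\<theta> + of_int m) - zseq x (Suc j) = 2*a - (zseq x (Suc j) - 2 * zseq x j)"
    unfolding a_def by simp
  have ha: "0 \<le> a" "a \<le> 1/3" using hm a_def by auto
  show ?case
  proof (rule exI[of _ m])
    show "0 \<le> 2 ^ Suc j * (\<theta> + of_int m) - zseq x (Suc j) \<and>
          2 ^ Suc j * (\<theta> + of_int m) - zseq x (Suc j) \<le> 1 / 3"
    proof (cases "d < 1/3")
      case True
      have "N = 0" using eqN ha hb hd True by (intro int_between) linarith+
      moreover have "zseq x (Suc j) = 2 * zseq x j + d" using zs True by simp
      ultimately show ?thesis using key eqN ha hb by simp
    next
      case F1: False
      show ?thesis
      proof (cases "d < 2/3")
        case True
        have "N = 0" using eqN ha hb hd True by (intro int_between) linarith+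
        moreover have "zseq x (Suc j) = 2 * zseq x j + 1/3" using zs True F1 by simp
        ultimately show ?thesis using key eqN ha hb F1 by simp
      next
        case False
        have "N + 1 = 0" using eqN ha hb hd False by (intro int_between) (simp, linarith)+
        then have "N = -1" by simp
        moreover have "zseq x (Suc j) = 2 * zseq x j" using zs False F1 by simp
        ultimately show ?thesis using key eqN ha hb hd by simp
      qed
    qed
  qed
qed

theorem mainTheorem1:
  fixes l :: nat and x :: "nat \<Rightarrow> real" and \<theta> :: real
  assumes "l \<ge> 1"
    and "\<And>k. 1 \<le> k \<Longrightarrow> k \<le> l \<Longrightarrow> 0 \<le> x k \<and> x k < 1"
    and "0 \<le> \<theta>" and "\<theta> < 1"
    and "\<And>k. 1 \<le> k \<Longrightarrow> k \<le> l \<Longrightarrow>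
           0 < mod1 (mod1 (2 ^ (k - 1) * \<theta>) - x k) \<and>
           mod1 (mod1 (2 ^ (k - 1) * \<theta>) - x k) < 1/3"
  shows "(\<exists>m::int. z x l / 2 ^ (l - 1) \<le> \<theta> + of_int m \<and>
                     \<theta> + of_int m \<le> (z x l + 1/3) / 2 ^ (l - 1))
         \<and> circ_dist (mod1 ((z x l + 1/6) / 2 ^ (l - 1))) \<theta> \<le> 1 / (3 * 2 ^ l)"
proof -
  have "l - 1 < l" using assms(1) by simp
  then obtain m :: int where hm: "0 \<le> 2^(l-1)*(\<theta> + of_int m) - zseq x (l-1)"
     "2^(l-1)*(\<theta> + of_int m) - zseq x (l-1) \<le> 1/3"
    using invariant[OF assms(3,4,5)] by blast
  define P :: real where "P = 2^(l-1)"
  have P: "P > 0" unfolding P_def by simp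
  have Pl: "(2::real)^l = 2 * P" unfolding P_def using assms(1)
    by (metis Suc_diff_1 less_le_trans zero_less_one power_Suc)
  have zz: "z x l = zseq x (l-1)" unfolding z_def by simp
  have h1: "z x l / P \<le> \<theta> + of_int m" using hm(1) P zz
    by (simp add: pos_divide_le_eq P_def mult.commute)
  have h2: "\<theta> + of_int m \<le> (z x l + 1/3) / P" using hm(2) P zz
    by (simp add: pos_le_divide_eq P_def mult.commute)
  define c where "c = (z x l + 1/6) / P"
  define r :: real where "r = 1 / (3 * 2 ^ l)"
  have rr: "r = 1/(6*P)" unfolding r_def Pl by simp
  have cl: "c - r = z x l / P" unfolding c_def rr using P by (simp add: field_simps)
  have cu: "c + r = (z x l + 1/3) / P" unfolding c_def rr using P by (simp add: field_simps)
  define e where "e = c - (\<theta> + of_int m)"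
  have he: "-r \<le> e" "e \<le> r" using h1 h2 cl cu e_def by linarith+
  have r6: "r \<le> 1/6" unfolding rr using P
    by (smt (verit) P_def divide_le_eq_1 le_divide_eq_1 one_le_power frac_le)
  have m1: "mod1 (mod1 c - \<theta>) = mod1 e"
  proof -
    have "mod1 c - \<theta> = e + of_int (m - \<lfloor>c\<rfloor>)" unfolding e_def mod1_def by simp
    then show ?thesis by (metis mod1_shift)
  qed
  have m2: "mod1 (\<theta> - mod1 c) = mod1 (-e)"
  proof -
    have "\<theta> - mod1 c = -e + of_int (\<lfloor>c\<rfloor> - m)" unfolding e_def mod1_def by simp
    then show ?thesis by (metis mod1_shift)
  qed
  have "circ_dist (mod1 c) \<theta> \<le> r"
  proof (cases "0 \<le> e")
    case True
    then have "mod1 e = e" using he r6 by (intro mod1_id) auto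
    then show ?thesis unfolding circ_dist_def m1 using he by simp
  next
    case False
    then have "mod1 (-e) = -e" using he r6 by (intro mod1_id) auto
    then show ?thesis unfolding circ_dist_def m2 using he by simp
  qed
  then show ?thesis using h1 h2 unfolding c_def r_def P_def by blast
qed

end
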